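(* Let $F:\mathsf V\to\mathsf W$ and $G:\mathsf W\to\mathsf V$ be morphisms of quantales, and assume that either $G\dashv F$ (as monotone maps), or $F\dashv G$ and $F$ is injective. Then for every Cauchy complete $\mathsf V$-category $X=(X,a)$, the $\mathsf W$-category $FX=(X,F\circ a)$ is Cauchy complete.
   Context: A quantale $(\mathsf V,\otimes,k)$ is a complete anti-symmetric lattice with an associative, commutative operation $\otimes$ with neutral element $k$ distributing over arbitrary suprema. A morphism of quantales $F:(\mathsf V,\otimes,k)\to(\mathsf W,\oplus,l)$ is a monotone map preserving all suprema with $F(u)\oplus F(v)=F(u\otimes v)$ and $F(k)=l$. $G\dashv F$ means $G(w)\le v\iff w\le F(v)$. A $\mathsf V$-category $(X,a)$ is a set with $a:X\times X\to\mathsf V$ such that $k\le a(x,x)$ and $a(x,y)\otimes a(y,z)\le a(x,z)$. A $\mathsf V$-module $\varphi:(X,a)\rightharpoonup(Y,b)$ is a map $X\times Y\to\mathsf V$ with $a(x,x')\otimes\varphi(x',y)\le\varphi(x,y)$ and $\varphi(x,y)\otimes b(y,y')\le\varphi(x,y')$; composition $(\psi\cdot\varphi)(x,z)=\bigvee_y\varphi(x,y)\otimes\psi(y,z)$; $\varphi\dashv\psi$ means $a\le\psi\cdot\varphi$ and $\varphi\cdot\psi\le b$. $E=(\{\star\},k)$. $X$ is Cauchy complete if every left adjoint module $\varphi:E\rightharpoonup X$ is of the form $y\mapsto a(x,y)$ for some $x\in X$. *)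

theory Defs
  imports Main
begin

definition quantale :: "('v::complete_lattice \<Rightarrow> 'v \<Rightarrow> 'v) \<Rightarrow> 'v \<Rightarrow> bool" where
  "quantale t k \<longleftrightarrow>
     (\<forall>u v w. t (t u v) w = t u (t v w)) \<and>
     (\<forall>u v. t u v = t v u) \<and>
     (\<forall>u. t k u = u \<and> t u k = u) \<and>
     (\<forall>u A. t u (Sup A) = Sup (t u ` A)) \<and>
     (\<forall>u A. t (Sup A) u = Sup ((\<lambda>v. t v u) ` A))"

definition quantale_morphism ::
  "('v::complete_lattice \<Rightarrow> 'v \<Rightarrow> 'v) \<Rightarrow> 'v \<Rightarrow> ('w::complete_lattice \<Rightarrow> 'w \<Rightarrow> 'w) \<Rightarrow> 'w
     \<Rightarrow> ('v \<Rightarrow> 'w) \<Rightarrow> bool" where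
  "quantale_morphism t k s l F \<longleftrightarrow>
     mono F \<and>
     (\<forall>A. F (Sup A) = Sup (F ` A)) \<and>
     (\<forall>u v. s (F u) (F v) = F (t u v)) \<and>
     F k = l"

definition adjoint :: "('w::order \<Rightarrow> 'v::order) \<Rightarrow> ('v \<Rightarrow> 'w) \<Rightarrow> bool" where
  "adjoint G F \<longleftrightarrow> (\<forall>w v. G w \<le> v \<longleftrightarrow> w \<le> F v)"

definition vcat :: "('v::complete_lattice \<Rightarrow> 'v \<Rightarrow> 'v) \<Rightarrow> 'v \<Rightarrow> 'x set \<Rightarrow> ('x \<Rightarrow> 'x \<Rightarrow> 'v) \<Rightarrow> bool" where
  "vcat t k X a \<longleftrightarrow>
     (\<forall>x\<in>X. k \<le> a x x) \<and>
     (\<forall>x\<in>X. \<forall>y\<in>X. \<forall>z\<in>X. t (a x y) (a y z) \<le> a x z)"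

text \<open>A module phi : E -> X (E = ({*},k)), represented by y |-> phi(*,y).\<close>
definition module_from_E :: "('v::complete_lattice \<Rightarrow> 'v \<Rightarrow> 'v) \<Rightarrow> 'v \<Rightarrow> 'x set \<Rightarrow> ('x \<Rightarrow> 'x \<Rightarrow> 'v)
     \<Rightarrow> ('x \<Rightarrow> 'v) \<Rightarrow> bool" where
  "module_from_E t k X a \<phi> \<longleftrightarrow>
     (\<forall>y\<in>X. t k (\<phi> y) \<le> \<phi> y) \<and>
     (\<forall>y\<in>X. \<forall>y'\<in>X. t (\<phi> y) (a y y') \<le> \<phi> y')"

text \<open>A module psi : X -> E, represented by x |-> psi(x,*).\<close>
definition module_to_E :: "('v::complete_lattice \<Rightarrow> 'v \<Rightarrow> 'v) \<Rightarrow> 'v \<Rightarrow> 'x set \<Rightarrow> ('x \<Rightarrow> 'x \<Rightarrow> 'v)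
     \<Rightarrow> ('x \<Rightarrow> 'v) \<Rightarrow> bool" where
  "module_to_E t k X a \<psi> \<longleftrightarrow>
     (\<forall>x\<in>X. \<forall>x'\<in>X. t (a x x') (\<psi> x') \<le> \<psi> x) \<and>
     (\<forall>x\<in>X. t (\<psi> x) k \<le> \<psi> x)"

text \<open>phi : E -> X is left adjoint: there is psi : X -> E with
  k = 1_E <= (psi . phi)(*,*) = Sup_y phi(*,y) (x) psi(y,*) and
  (phi . psi)(x,y) = psi(x,*) (x) phi(*,y) <= a(x,y).\<close>
definition left_adjoint_module_from_E ::
  "('v::complete_lattice \<Rightarrow> 'v \<Rightarrow> 'v) \<Rightarrow> 'v \<Rightarrow> 'x set \<Rightarrow> ('x \<Rightarrow> 'x \<Rightarrow> 'v) \<Rightarrow> ('x \<Rightarrow> 'v) \<Rightarrow> bool" where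
  "left_adjoint_module_from_E t k X a \<phi> \<longleftrightarrow>
     module_from_E t k X a \<phi> \<and>
     (\<exists>\<psi>. module_to_E t k X a \<psi> \<and>
          k \<le> Sup ((\<lambda>y. t (\<phi> y) (\<psi> y)) ` X) \<and>
          (\<forall>x\<in>X. \<forall>y\<in>X. t (\<psi> x) (\<phi> y) \<le> a x y))"

definition cauchy_complete :: "('v::complete_lattice \<Rightarrow> 'v \<Rightarrow> 'v) \<Rightarrow> 'v \<Rightarrow> 'x set \<Rightarrow> ('x \<Rightarrow> 'x \<Rightarrow> 'v) \<Rightarrow> bool" where
  "cauchy_complete t k X a \<longleftrightarrow>
     (\<forall>\<phi>. left_adjoint_module_from_E t k X a \<phi> \<longrightarrow> (\<exists>x\<in>X. \<forall>y\<in>X. \<phi> y = a x y))"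

end

theory Submission
  imports Defs
begin

locale quant =
  fixes t :: "'v::complete_lattice \<Rightarrow> 'v \<Rightarrow> 'v" and k :: 'v
  assumes q: "quantale t k"
begin

lemma assoc: "t (t u v) w = t u (t v w)" using q unfolding quantale_def by blast
lemma comm: "t u v = t v u" using q unfolding quantale_def by blast
lemma unitl[simp]: "t k u = u" using q unfolding quantale_def by blast
lemma unitr[simp]: "t u k = u" using q unfolding quantale_def by blast
lemma distr: "t u (Sup A) = Sup (t u ` A)" using q unfolding quantale_def by blast
lemma distl: "t (Sup A) u = Sup ((\<lambda>v. t v u) ` A)" using q unfolding quantale_def by blast

lemma monol: "u \<le> u' \<Longrightarrow> t u v \<le> t u' v"
proof -
  assume h: "u \<le> u'"
  have e: "Sup {u,u'} = u'" using h by (simp add: sup.absorb2)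
  have "t u' v = Sup ((\<lambda>x. t x v) ` {u,u'})" using distl[of "{u,u'}" v] unfolding e .
  also have "\<dots> = sup (t u v) (t u' v)" by simp
  finally have "t u' v = sup (t u v) (t u' v)" .
  moreover have "t u v \<le> sup (t u v) (t u' v)" by (rule sup.cobounded1)
  ultimately show ?thesis by simp
qed

lemma monor: "v \<le> v' \<Longrightarrow> t u v \<le> t u v'"
proof -
  assume "v \<le> v'"
  then have "t v u \<le> t v' u" by (rule monol)
  then show ?thesis by (simp add: comm[of u v] comm[of u v'])
qed

lemma mono2: "u \<le> u' \<Longrightarrow> v \<le> v' \<Longrightarrow> t u v \<le> t u' v'"
proof -
  assume a1: "u \<le> u'" and a2: "v \<le> v'"
  show ?thesis using monol[OF a1] monor[OF a2] by (rule order_trans)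
qed

lemma sup_le: "(\<And>x y. x \<in> A \<Longrightarrow> y \<in> B \<Longrightarrow> t x y \<le> c) \<Longrightarrow> t (Sup A) (Sup B) \<le> c"
proof -
  assume h: "\<And>x y. x \<in> A \<Longrightarrow> y \<in> B \<Longrightarrow> t x y \<le> c"
  have "t x (Sup B) \<le> c" if x: "x \<in> A" for x
  proof -
    have "t x (Sup B) = Sup (t x ` B)" by (rule distr)
    also have "\<dots> \<le> c" by (rule Sup_least) (use h x in blast)
    finally show ?thesis .
  qed
  then have "Sup ((\<lambda>v. t v (Sup B)) ` A) \<le> c" by (intro Sup_least) blast
  then show ?thesis by (simp only: distl)
qed

lemma sup_le1: "(\<And>x. x \<in> A \<Longrightarrow> t x y \<le> c) \<Longrightarrow> t (Sup A) y \<le> c"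
  using sup_le[of A "{y}" c] by simp

lemma sup_le2: "(\<And>y. y \<in> B \<Longrightarrow> t x y \<le> c) \<Longrightarrow> t x (Sup B) \<le> c"
  using sup_le[of "{x}" B c] by simp

end

lemma morph:
  assumes "quantale_morphism t k s l F"
  shows "mono F" "F (Sup A) = Sup (F ` A)" "s (F u) (F v) = F (t u v)" "F k = l"
  using assms unfolding quantale_morphism_def by blast+

lemma morph_le: "quantale_morphism t k s l F \<Longrightarrow> u \<le> v \<Longrightarrow> F u \<le> F v"
  using morph(1) monoD by blast

lemma case2:
  fixes tV :: "'v::complete_lattice \<Rightarrow> 'v \<Rightarrow> 'v" and kV :: 'v
    and tW :: "'w::complete_lattice \<Rightarrow> 'w \<Rightarrow> 'w" and kW :: 'w
    and F :: "'v \<Rightarrow> 'w" and G :: "'w \<Rightarrow> 'v"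
    and X :: "'x set" and a :: "'x \<Rightarrow> 'x \<Rightarrow> 'v"
  assumes qV: "quantale tV kV" and qW: "quantale tW kW"
    and mF: "quantale_morphism tV kV tW kW F" and mG: "quantale_morphism tW kW tV kV G"
    and adj: "adjoint F G" and inj: "inj F"
    and vc: "vcat tV kV X a" and cc: "cauchy_complete tV kV X a"
  shows "cauchy_complete tW kW X (\<lambda>x y. F (a x y))"
  unfolding cauchy_complete_def
proof (intro allI impI)
  interpret V: quant tV kV by (rule quant.intro, fact)
  interpret W: quant tW kW by (rule quant.intro, fact)
  fix \<phi> assume la: "left_adjoint_module_from_E tW kW X (\<lambda>x y. F (a x y)) \<phi>"
  then obtain \<psi> where mphi: "module_from_E tW kW X (\<lambda>x y. F (a x y)) \<phi>"
    and mpsi: "module_to_E tW kW X (\<lambda>x y. F (a x y)) \<psi>"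
    and un: "kW \<le> Sup ((\<lambda>y. tW (\<phi> y) (\<psi> y)) ` X)"
    and co: "\<forall>x\<in>X. \<forall>y\<in>X. tW (\<psi> x) (\<phi> y) \<le> F (a x y)"
    unfolding left_adjoint_module_from_E_def by blast
  have GF: "G (F v) = v" for v
  proof -
    have "F (G (F v)) \<le> F v" using adj unfolding adjoint_def by blast
    moreover have "v \<le> G (F v)" using adj unfolding adjoint_def by blast
    then have "F v \<le> F (G (F v))" using morph_le[OF mF] by blast
    ultimately show ?thesis using inj by (simp add: inj_eq antisym)
  qed
  have FG: "F (G w) \<le> w" for w using adj unfolding adjoint_def by blast
  have Gm: "tV (G u) (G v) = G (tW u v)" for u v using morph(3)[OF mG] .
  have Fm: "tW (F u) (F v) = F (tV u v)" for u v using morph(3)[OF mF] .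
  have Gl: "u \<le> v \<Longrightarrow> G u \<le> G v" for u v using morph_le[OF mG] .
  have Fl: "u \<le> v \<Longrightarrow> F u \<le> F v" for u v using morph_le[OF mF] .
  have m1: "module_from_E tV kV X a (\<lambda>y. G (\<phi> y))"
    unfolding module_from_E_def
  proof (intro conjI ballI)
    fix y y' assume "y \<in> X" "y' \<in> X"
    have "tV (G (\<phi> y)) (a y y') = G (tW (\<phi> y) (F (a y y')))" using Gm[of "\<phi> y" "F (a y y')"] GF[of "a y y'"] by simp
    also have "\<dots> \<le> G (\<phi> y')" using mphi \<open>y\<in>X\<close> \<open>y'\<in>X\<close> Gl unfolding module_from_E_def by blast
    finally show "tV (G (\<phi> y)) (a y y') \<le> G (\<phi> y')" .
  qed simp
  have m2: "module_to_E tV kV X a (\<lambda>y. G (\<psi> y))"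
    unfolding module_to_E_def
  proof (intro conjI ballI)
    fix y y' assume "y \<in> X" "y' \<in> X"
    have "tV (a y y') (G (\<psi> y')) = G (tW (F (a y y')) (\<psi> y'))" using Gm[of "F (a y y')" "\<psi> y'"] GF[of "a y y'"] by simp
    also have "\<dots> \<le> G (\<psi> y)" using mpsi \<open>y\<in>X\<close> \<open>y'\<in>X\<close> Gl unfolding module_to_E_def by blast
    finally show "tV (a y y') (G (\<psi> y')) \<le> G (\<psi> y)" .
  qed simp
  have u2: "kV \<le> Sup ((\<lambda>y. tV (G (\<phi> y)) (G (\<psi> y))) ` X)"
  proof -
    have "kV = G kW" using morph(4)[OF mG] by simp
    also have "\<dots> \<le> G (Sup ((\<lambda>y. tW (\<phi> y) (\<psi> y)) ` X))" using Gl un by blast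
    also have "\<dots> = Sup ((\<lambda>y. tV (G (\<phi> y)) (G (\<psi> y))) ` X)"
      by (simp add: morph(2)[OF mG] image_comp Gm comp_def)
    finally show ?thesis .
  qed
  have c2: "\<forall>x\<in>X. \<forall>y\<in>X. tV (G (\<psi> x)) (G (\<phi> y)) \<le> a x y"
  proof (intro ballI)
    fix x y assume "x \<in> X" "y \<in> X"
    then have "G (tW (\<psi> x) (\<phi> y)) \<le> G (F (a x y))" using co Gl by blast
    then show "tV (G (\<psi> x)) (G (\<phi> y)) \<le> a x y" using Gm GF by simp
  qed
  have "left_adjoint_module_from_E tV kV X a (\<lambda>y. G (\<phi> y))"
    unfolding left_adjoint_module_from_E_def using m1 m2 u2 c2 by blast
  then obtain x0 where x0: "x0 \<in> X" "\<forall>y\<in>X. G (\<phi> y) = a x0 y"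
    using cc unfolding cauchy_complete_def by blast
  show "\<exists>x\<in>X. \<forall>y\<in>X. \<phi> y = F (a x y)"
  proof (intro bexI[OF _ x0(1)] ballI antisym)
    fix y assume y: "y \<in> X"
    have "G (\<phi> y) = a x0 y" using x0 y by blast
    then show "F (a x0 y) \<le> \<phi> y" using FG[of "\<phi> y"] by simp
    have kW: "kW \<le> Sup ((\<lambda>z. tW (F (G (\<phi> z))) (F (G (\<psi> z)))) ` X)"
    proof -
      have "kW = F kV" using morph(4)[OF mF] by simp
      also have "\<dots> \<le> F (Sup ((\<lambda>y. tV (G (\<phi> y)) (G (\<psi> y))) ` X))" using Fl u2 by blast
      also have "\<dots> = Sup ((\<lambda>z. tW (F (G (\<phi> z))) (F (G (\<psi> z)))) ` X)"
        by (simp add: morph(2)[OF mF] image_comp Fm comp_def)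
      finally show ?thesis .
    qed
    have "\<phi> y = tW kW (\<phi> y)" by simp
    also have "\<dots> \<le> tW (Sup ((\<lambda>z. tW (F (G (\<phi> z))) (F (G (\<psi> z)))) ` X)) (\<phi> y)"
      using W.monol kW by blast
    also have "\<dots> \<le> F (G (\<phi> y))"
    proof (rule W.sup_le1)
      fix c assume "c \<in> (\<lambda>z. tW (F (G (\<phi> z))) (F (G (\<psi> z)))) ` X"
      then obtain z where z: "z \<in> X" and c: "c = tW (F (G (\<phi> z))) (F (G (\<psi> z)))" by blast
      have "tW c (\<phi> y) = tW (F (G (\<phi> z))) (tW (F (G (\<psi> z))) (\<phi> y))" using c W.assoc by simp
      also have "\<dots> \<le> tW (F (G (\<phi> z))) (F (a z y))"
      proof (rule W.mono2[OF order_refl])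
        have "tW (F (G (\<psi> z))) (\<phi> y) \<le> tW (\<psi> z) (\<phi> y)" by (rule W.monol[OF FG])
        also have "\<dots> \<le> F (a z y)" using co z y by blast
        finally show "tW (F (G (\<psi> z))) (\<phi> y) \<le> F (a z y)" .
      qed
      also have "\<dots> = F (tV (G (\<phi> z)) (a z y))" by (simp add: Fm)
      also have "\<dots> \<le> F (G (\<phi> y))" using m1 z y Fl unfolding module_from_E_def by blast
      finally show "tW c (\<phi> y) \<le> F (G (\<phi> y))" .
    qed
    finally show "\<phi> y \<le> F (a x0 y)" using x0 y by simp
  qed
qed

lemma case1:
  fixes tV :: "'v::complete_lattice \<Rightarrow> 'v \<Rightarrow> 'v" and kV :: 'v
    and tW :: "'w::complete_lattice \<Rightarrow> 'w \<Rightarrow> 'w" and kW :: 'w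
    and F :: "'v \<Rightarrow> 'w" and G :: "'w \<Rightarrow> 'v"
    and X :: "'x set" and a :: "'x \<Rightarrow> 'x \<Rightarrow> 'v"
  assumes qV: "quantale tV kV" and qW: "quantale tW kW"
    and mF: "quantale_morphism tV kV tW kW F" and mG: "quantale_morphism tW kW tV kV G"
    and adj: "adjoint G F"
    and vc: "vcat tV kV X a" and cc: "cauchy_complete tV kV X a"
  shows "cauchy_complete tW kW X (\<lambda>x y. F (a x y))"
  unfolding cauchy_complete_def
proof (intro allI impI)
  interpret V: quant tV kV by (rule quant.intro, fact)
  interpret W: quant tW kW by (rule quant.intro, fact)
  have refl: "x \<in> X \<Longrightarrow> kV \<le> a x x" for x using vc unfolding vcat_def by blast
  have trans: "x \<in> X \<Longrightarrow> y \<in> X \<Longrightarrow> z \<in> X \<Longrightarrow> tV (a x y) (a y z) \<le> a x z" for x y z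
    using vc unfolding vcat_def by blast
  fix \<phi> assume la: "left_adjoint_module_from_E tW kW X (\<lambda>x y. F (a x y)) \<phi>"
  then obtain \<psi> where mphi: "module_from_E tW kW X (\<lambda>x y. F (a x y)) \<phi>"
    and mpsi: "module_to_E tW kW X (\<lambda>x y. F (a x y)) \<psi>"
    and un: "kW \<le> Sup ((\<lambda>y. tW (\<phi> y) (\<psi> y)) ` X)"
    and co: "\<forall>x\<in>X. \<forall>y\<in>X. tW (\<psi> x) (\<phi> y) \<le> F (a x y)"
    unfolding left_adjoint_module_from_E_def by blast
  have GF: "G (F v) \<le> v" for v using adj unfolding adjoint_def by blast
  have FG: "w \<le> F (G w)" for w using adj unfolding adjoint_def by blast
  have adjI: "G w \<le> v \<Longrightarrow> w \<le> F v" for w v using adj unfolding adjoint_def by blast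
  have Gm: "tV (G u) (G v) = G (tW u v)" for u v using morph(3)[OF mG] .
  have Fm: "tW (F u) (F v) = F (tV u v)" for u v using morph(3)[OF mF] .
  have Gl: "u \<le> v \<Longrightarrow> G u \<le> G v" for u v using morph_le[OF mG] .
  have Fl: "u \<le> v \<Longrightarrow> F u \<le> F v" for u v using morph_le[OF mF] .
  have GFa: "x \<in> X \<Longrightarrow> y \<in> X \<Longrightarrow> tV (G (\<psi> x)) (G (\<phi> y)) \<le> a x y" for x y
  proof -
    assume "x \<in> X" "y \<in> X"
    then have "G (tW (\<psi> x) (\<phi> y)) \<le> G (F (a x y))" using co Gl by blast
    then show ?thesis using Gm GF order_trans by metis
  qed
  define \<phi>2 where "\<phi>2 y = Sup ((\<lambda>z. tV (G (\<phi> z)) (a z y)) ` X)" for y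
  define \<psi>2 where "\<psi>2 x = Sup ((\<lambda>x'. tV (a x x') (G (\<psi> x'))) ` X)" for x
  have phi2ge: "y \<in> X \<Longrightarrow> G (\<phi> y) \<le> \<phi>2 y" for y
  proof -
    assume y: "y \<in> X"
    have "G (\<phi> y) = tV (G (\<phi> y)) kV" by simp
    also have "\<dots> \<le> tV (G (\<phi> y)) (a y y)" using V.mono2[OF order_refl refl[OF y]] .
    also have "\<dots> \<le> \<phi>2 y" unfolding \<phi>2_def using y by (blast intro: Sup_upper)
    finally show ?thesis .
  qed
  have psi2ge: "y \<in> X \<Longrightarrow> G (\<psi> y) \<le> \<psi>2 y" for y
  proof -
    assume y: "y \<in> X"
    have "G (\<psi> y) = tV kV (G (\<psi> y))" by simp
    also have "\<dots> \<le> tV (a y y) (G (\<psi> y))" using V.monol[OF refl[OF y]] .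
    also have "\<dots> \<le> \<psi>2 y" unfolding \<psi>2_def using y by (blast intro: Sup_upper)
    finally show ?thesis .
  qed
  have m1: "module_from_E tV kV X a \<phi>2"
    unfolding module_from_E_def
  proof (intro conjI ballI)
    fix y y' assume y: "y \<in> X" and y': "y' \<in> X"
    show "tV (\<phi>2 y) (a y y') \<le> \<phi>2 y'"
      unfolding \<phi>2_def[of y]
    proof (rule V.sup_le1)
      fix c assume "c \<in> (\<lambda>z. tV (G (\<phi> z)) (a z y)) ` X"
      then obtain z where z: "z \<in> X" and c: "c = tV (G (\<phi> z)) (a z y)" by blast
      have "tV c (a y y') = tV (G (\<phi> z)) (tV (a z y) (a y y'))" using c V.assoc by simp
      also have "\<dots> \<le> tV (G (\<phi> z)) (a z y')" using V.mono2[OF order_refl trans[OF z y y']] .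
      also have "\<dots> \<le> \<phi>2 y'" unfolding \<phi>2_def using z by (blast intro: Sup_upper)
      finally show "tV c (a y y') \<le> \<phi>2 y'" .
    qed
  qed simp
  have m2: "module_to_E tV kV X a \<psi>2"
    unfolding module_to_E_def
  proof (intro conjI ballI)
    fix x x' assume x: "x \<in> X" and x': "x' \<in> X"
    show "tV (a x x') (\<psi>2 x') \<le> \<psi>2 x"
      unfolding \<psi>2_def[of x']
    proof (rule V.sup_le2)
      fix c assume "c \<in> (\<lambda>z. tV (a x' z) (G (\<psi> z))) ` X"
      then obtain z where z: "z \<in> X" and c: "c = tV (a x' z) (G (\<psi> z))" by blast
      have "tV (a x x') c = tV (tV (a x x') (a x' z)) (G (\<psi> z))" using c V.assoc by simp
      also have "\<dots> \<le> tV (a x z) (G (\<psi> z))" using V.monol[OF trans[OF x x' z]] .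
      also have "\<dots> \<le> \<psi>2 x" unfolding \<psi>2_def using z by (blast intro: Sup_upper)
      finally show "tV (a x x') c \<le> \<psi>2 x" .
    qed
  qed simp
  have u2: "kV \<le> Sup ((\<lambda>y. tV (\<phi>2 y) (\<psi>2 y)) ` X)"
  proof -
    have "kV = G kW" using morph(4)[OF mG] by simp
    also have "\<dots> \<le> G (Sup ((\<lambda>y. tW (\<phi> y) (\<psi> y)) ` X))" using Gl un by blast
    also have "\<dots> = Sup ((\<lambda>y. tV (G (\<phi> y)) (G (\<psi> y))) ` X)"
      by (simp add: morph(2)[OF mG] image_comp Gm comp_def)
    also have "\<dots> \<le> Sup ((\<lambda>y. tV (\<phi>2 y) (\<psi>2 y)) ` X)"
      by (rule SUP_mono) (use V.mono2 phi2ge psi2ge in blast)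
    finally show ?thesis .
  qed
  have c2: "\<forall>x\<in>X. \<forall>y\<in>X. tV (\<psi>2 x) (\<phi>2 y) \<le> a x y"
  proof (intro ballI)
    fix x y assume x: "x \<in> X" and y: "y \<in> X"
    show "tV (\<psi>2 x) (\<phi>2 y) \<le> a x y"
      unfolding \<psi>2_def \<phi>2_def
    proof (rule V.sup_le)
      fix c d assume "c \<in> (\<lambda>x'. tV (a x x') (G (\<psi> x'))) ` X" "d \<in> (\<lambda>z. tV (G (\<phi> z)) (a z y)) ` X"
      then obtain x' z where x': "x' \<in> X" and z: "z \<in> X" and c: "c = tV (a x x') (G (\<psi> x'))"
        and d: "d = tV (G (\<phi> z)) (a z y)" by blast
      have "tV c d = tV (a x x') (tV (tV (G (\<psi> x')) (G (\<phi> z))) (a z y))" using c d V.assoc by simp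
      also have "\<dots> \<le> tV (a x x') (tV (a x' z) (a z y))"
        using V.mono2[OF order_refl V.monol[OF GFa[OF x' z]]] .
      also have "\<dots> \<le> tV (a x x') (a x' y)" using V.mono2[OF order_refl trans[OF x' z y]] .
      also have "\<dots> \<le> a x y" using trans[OF x x' y] .
      finally show "tV c d \<le> a x y" .
    qed
  qed
  have "left_adjoint_module_from_E tV kV X a \<phi>2"
    unfolding left_adjoint_module_from_E_def using m1 m2 u2 c2 by blast
  then obtain x0 where x0X: "x0 \<in> X" and x0: "\<And>y. y \<in> X \<Longrightarrow> \<phi>2 y = a x0 y"
    using cc unfolding cauchy_complete_def by blast
  have B: "x \<in> X \<Longrightarrow> \<psi> x \<le> F (a x x0)" for x
  proof -
    assume x: "x \<in> X"
    have "G (\<psi> x) = tV (G (\<psi> x)) kV" by simp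
    also have "\<dots> \<le> tV (G (\<psi> x)) (a x0 x0)" using V.mono2[OF order_refl refl[OF x0X]] .
    also have "\<dots> = tV (G (\<psi> x)) (\<phi>2 x0)" using x0[OF x0X] by simp
    also have "\<dots> \<le> a x x0"
      unfolding \<phi>2_def
    proof (rule V.sup_le2)
      fix d assume "d \<in> (\<lambda>z. tV (G (\<phi> z)) (a z x0)) ` X"
      then obtain z where z: "z \<in> X" and d: "d = tV (G (\<phi> z)) (a z x0)" by blast
      have "tV (G (\<psi> x)) d = tV (tV (G (\<psi> x)) (G (\<phi> z))) (a z x0)" using d V.assoc by simp
      also have "\<dots> \<le> tV (a x z) (a z x0)" using V.monol[OF GFa[OF x z]] .
      also have "\<dots> \<le> a x x0" using trans[OF x z x0X] .
      finally show "tV (G (\<psi> x)) d \<le> a x x0" .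
    qed
    finally show ?thesis by (rule adjI)
  qed
  show "\<exists>x\<in>X. \<forall>y\<in>X. \<phi> y = F (a x y)"
  proof (intro bexI[OF _ x0X] ballI antisym)
    fix y assume y: "y \<in> X"
    have "\<phi> y \<le> F (G (\<phi> y))" by (rule FG)
    also have "\<dots> \<le> F (a x0 y)" using Fl phi2ge[OF y] x0[OF y] by simp
    finally show "\<phi> y \<le> F (a x0 y)" .
    have "F (a x0 y) = tW kW (F (a x0 y))" by simp
    also have "\<dots> \<le> tW (Sup ((\<lambda>y. tW (\<phi> y) (\<psi> y)) ` X)) (F (a x0 y))"
      using W.monol un by blast
    also have "\<dots> \<le> \<phi> y"
    proof (rule W.sup_le1)
      fix c assume "c \<in> (\<lambda>y. tW (\<phi> y) (\<psi> y)) ` X"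
      then obtain z where z: "z \<in> X" and c: "c = tW (\<phi> z) (\<psi> z)" by blast
      have "tW c (F (a x0 y)) = tW (\<phi> z) (tW (\<psi> z) (F (a x0 y)))" using c W.assoc by simp
      also have "\<dots> \<le> tW (\<phi> z) (tW (F (a z x0)) (F (a x0 y)))"
        using W.mono2[OF order_refl W.monol[OF B[OF z]]] .
      also have "\<dots> = tW (\<phi> z) (F (tV (a z x0) (a x0 y)))" by (simp add: Fm)
      also have "\<dots> \<le> tW (\<phi> z) (F (a z y))" using W.mono2[OF order_refl Fl[OF trans[OF z x0X y]]] .
      also have "\<dots> \<le> \<phi> y" using mphi z y unfolding module_from_E_def by blast
      finally show "tW c (F (a x0 y)) \<le> \<phi> y" .
    qed
    finally show "F (a x0 y) \<le> \<phi> y" .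
  qed
qed

theorem corollary3p3:
  fixes tV :: "'v::complete_lattice \<Rightarrow> 'v \<Rightarrow> 'v" and kV :: 'v
    and tW :: "'w::complete_lattice \<Rightarrow> 'w \<Rightarrow> 'w" and kW :: 'w
    and F :: "'v \<Rightarrow> 'w" and G :: "'w \<Rightarrow> 'v"
    and X :: "'x set" and a :: "'x \<Rightarrow> 'x \<Rightarrow> 'v"
  assumes "quantale tV kV" and "quantale tW kW"
    and "quantale_morphism tV kV tW kW F" and "quantale_morphism tW kW tV kV G"
    and "adjoint G F \<or> (adjoint F G \<and> inj F)"
    and "vcat tV kV X a" and "cauchy_complete tV kV X a"
  shows "cauchy_complete tW kW X (\<lambda>x y. F (a x y))"
  using assms case1[of tV kV tW kW F G X a] case2[of tV kV tW kW F G X a] by blast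

end
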